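(* Let $k$ be an odd integer with $k\ge5$, and let $n>k$ be a positive integer with $n\equiv (k+1)/2\pmod k$. Then $\mathrm{msum}(n,k)>1$.
   Context: Let $n,k$ be positive integers with $n>k$ and let $S_n$ be the set of permutations $\pi=(\pi_1,\dots,\pi_n)$ of $1,\dots,n$. Indices are taken cyclically: $\pi_{n+i}=\pi_i$. The $k$-consecutive sums of $\pi$ are $s_i=\sum_{j=0}^{k-1}\pi_{i+j}$ for $i=1,\dots,n$. Define $\mathrm{msum}(\pi,k)=\max\{s_i: 1\le i\le n\}-\frac{k(n+1)}{2}$ and $\mathrm{msum}(n,k)=\min\{\mathrm{msum}(\pi,k):\pi\in S_n\}$. *)

theory Defs
  imports Main Complex_Main
begin

text \<open>Permutations of 1..n represented as bijections from positions {0..<n}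
  onto values {1..n}; position i (0-based) corresponds to pi_(i+1).
  Cyclic indexing is via mod n.\<close>

definition perms_of :: "nat \<Rightarrow> (nat \<Rightarrow> nat) set" where
  "perms_of n = {p. bij_betw p {0..<n} {1..n} \<and> (\<forall>i. i \<ge> n \<longrightarrow> p i = 0)}"

definition ksum :: "nat \<Rightarrow> (nat \<Rightarrow> nat) \<Rightarrow> nat \<Rightarrow> nat \<Rightarrow> nat" where
  "ksum n p k i = (\<Sum>j<k. p ((i + j) mod n))"

definition msum_perm :: "nat \<Rightarrow> (nat \<Rightarrow> nat) \<Rightarrow> nat \<Rightarrow> real" where
  "msum_perm n p k = real (Max {ksum n p k i | i. i < n}) - real k * (real n + 1) / 2"

definition msum :: "nat \<Rightarrow> nat \<Rightarrow> real" where
  "msum n k = Min {msum_perm n p k | p. p \<in> perms_of n}"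

end

theory Submission
  imports Defs
begin

lemma sum_split_nat:
  "(\<Sum>j< m + l. (g::nat\<Rightarrow>nat) j) = (\<Sum>j<m. g j) + (\<Sum>j<l. g (m+j))"
  by (induction l) auto

lemma sum_block:
  assumes "\<forall>x. (\<Sum>j<k. (g::nat\<Rightarrow>nat) (x+j)) \<le> M"
  shows "(\<Sum>j<q*k. g (d+j)) \<le> q*M"
proof (induction q)
  case 0 then show ?case by simp
next
  case (Suc q)
  have "(\<Sum>j<Suc q*k. g (d+j)) = (\<Sum>j<q*k. g (d+j)) + (\<Sum>j<k. g (d+(q*k+j)))"
    using sum_split_nat[of "\<lambda>j. g (d+j)" "q*k" k] by (simp add: add.commute)
  also have "\<dots> \<le> q*M + M"
    using Suc assms[rule_format, of "d+q*k"] by (simp add: add.assoc)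
  finally show ?case by simp
qed

lemma sum_cyc:
  assumes "\<forall>x. (g::nat\<Rightarrow>nat) (x+n) = g x"
  shows "(\<Sum>j<n. g (c+j)) = (\<Sum>j<n. g j)"
proof (induction c)
  case 0 then show ?case by simp
next
  case (Suc c)
  have a: "(\<Sum>j<Suc n. g (c+j)) = g c + (\<Sum>j<n. g (Suc c + j))"
    by (subst sum.lessThan_Suc_shift) simp
  have b: "(\<Sum>j<Suc n. g (c+j)) = (\<Sum>j<n. g (c + j)) + g c"
    using assms by simp
  from a b Suc show ?case by simp
qed

lemma gauss2: "2 * (\<Sum>i\<in>{1..n}. i) = n * (n + 1::nat)"
  by (induction n) (auto simp: algebra_simps)

lemma main_perm:
  assumes p: "p \<in> perms_of n" and nq: "n = q*k + r" and rk: "2*r = k+1"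
    and q1: "q \<ge> 1" and k5: "k \<ge> 5"
  shows "msum_perm n p k > 1"
proof -
  have n0: "n > 0" using nq q1 k5 by (metis add_gr_0 mult_pos_pos less_le_trans zero_less_one not_le le0 not_numeral_le_zero)
  have r1: "r \<ge> 1" "r \<le> n" using rk nq by auto
  define g where "g = (\<lambda>x. p (x mod n))"
  define S where "S = {ksum n p k i | i. i < n}"
  define M where "M = Max S"
  have S_eq: "S = (\<lambda>i. ksum n p k i) ` {..<n}" unfolding S_def by auto
  have finS: "finite S" using S_eq by simp
  have ks: "ksum n p k x = (\<Sum>j<k. g (x+j))" for x
    unfolding ksum_def g_def ..
  have hM: "\<forall>x. (\<Sum>j<k. g (x+j)) \<le> M"
  proof
    fix x
    have "ksum n p k (x mod n) \<in> S" using S_eq n0 by auto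
    hence "ksum n p k (x mod n) \<le> M" unfolding M_def using finS by simp
    moreover have "ksum n p k (x mod n) = ksum n p k x"
      unfolding ksum_def by (simp add: mod_add_left_eq)
    ultimately show "(\<Sum>j<k. g (x+j)) \<le> M" using ks by simp
  qed
  have per: "\<forall>x. g (x+n) = g x" unfolding g_def by simp
  have bij: "bij_betw p {0..<n} {1..n}" using p unfolding perms_of_def by simp
  have Psum: "2 * (\<Sum>j<n. p j) = n*(n+1)"
  proof -
    have "(\<Sum>j\<in>{0..<n}. p j) = (\<Sum>i\<in>{1..n}. i)"
      using sum.reindex_bij_betw[OF bij, of "\<lambda>i. i"] by simp
    thus ?thesis using gauss2[of n] by (simp add: lessThan_atLeast0)
  qed
  define P where "P = (\<Sum>j<n. p j)"
  have hT: "(\<Sum>j<n. g (c+j)) = P" for c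
  proof -
    have "(\<Sum>j<n. g (c+j)) = (\<Sum>j<n. g j)" using sum_cyc[OF per] .
    also have "\<dots> = P" unfolding P_def g_def by (intro sum.cong) auto
    finally show ?thesis .
  qed
  have hC: "(\<Sum>j<r. g (c+j)) + q*M \<ge> P" for c
  proof -
    have "P = (\<Sum>j<r + q*k. g (c+j))" using hT[of c] nq by (simp add: add.commute)
    also have "\<dots> = (\<Sum>j<r. g (c+j)) + (\<Sum>j<q*k. g ((c+r)+j))"
      using sum_split_nat[of "\<lambda>j. g (c+j)" r "q*k"] by (simp add: add.assoc)
    also have "\<dots> \<le> (\<Sum>j<r. g (c+j)) + q*M"
      using sum_block[OF hM, where q=q and d="c+r"] by simp
    finally show ?thesis .
  qed
  obtain a where a: "a < n" "p a = 1"
    using bij n0 unfolding bij_betw_def by (metis atLeastAtMost_iff image_iff atLeastLessThan_iff le_refl less_one not_less)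
  define b where "b = a + n + 1 - r"
  have br: "b + r = a + n + 1" unfolding b_def using r1 by simp
  have kr: "k = r + (r - 1)" using rk by simp
  have e1: "(\<Sum>j<k. g (b+j)) = (\<Sum>j<r. g (b+j)) + (\<Sum>j<r-1. g (b+r+j))"
    using sum_split_nat[of "\<lambda>j. g (b+j)" r "r-1"] kr by (simp add: add.assoc)
  have e2: "(\<Sum>j<r-1. g (b+r+j)) = (\<Sum>j<r-1. g (a+1+j))"
    unfolding br g_def
  proof (intro sum.cong refl)
    fix j show "p ((a + n + 1 + j) mod n) = p ((a + 1 + j) mod n)"
      by (metis add.commute add.left_commute mod_add_self2)
  qed
  have e3: "(\<Sum>j<r. g (a+j)) = g a + (\<Sum>j<r-1. g (a+1+j))"
  proof -
    have "r = Suc (r-1)" using r1 by simp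
    hence "(\<Sum>j<r. g (a+j)) = (\<Sum>j<Suc (r-1). g (a+j))" by simp
    also have "\<dots> = g a + (\<Sum>j<r-1. g (a+1+j))"
      by (subst sum.lessThan_Suc_shift) simp
    finally show ?thesis .
  qed
  have ga: "g a = 1" unfolding g_def using a by simp
  have sk: "(\<Sum>j<r. g (b+j)) + (\<Sum>j<r. g (a+j)) \<le> M + 1"
    using e1 e2 e3 ga hM by (metis add.assoc add.commute add_le_cancel_right)
  have A1: "(\<Sum>j<r. g (a+j)) + q*M \<ge> P" by (rule hC)
  have A2: "(\<Sum>j<r. g (b+j)) + q*M \<ge> P" by (rule hC)
  have key: "(2*q+1)*M + 1 \<ge> n*(n+1)"
    using sk A1 A2 Psum unfolding P_def by (simp add: algebra_simps)
  have kk: "(2*q+1)*k + 1 = 2*n" using nq rk by (simp add: algebra_simps)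
  have nbig: "n \<ge> 4*q+4"
  proof -
    have h1: "q*k \<ge> q*5" using k5 by simp
    have h2: "r \<ge> 3" using rk k5 by simp
    show ?thesis using nq q1 h1 h2 by linarith
  qed
  have fin: "2*M > k*(n+1) + 2"
  proof (rule ccontr)
    assume "\<not> ?thesis"
    hence "2*M \<le> k*(n+1) + 2" by simp
    hence "(2*q+1)*(2*M) \<le> (2*q+1)*(k*(n+1)+2)" by (rule mult_le_mono2)
    also have "\<dots> = ((2*q+1)*k)*(n+1) + 2*(2*q+1)" by (simp add: algebra_simps)
    finally have h: "(2*q+1)*(2*M) \<le> ((2*q+1)*k)*(n+1) + 2*(2*q+1)" .
    have h2: "2*((2*q+1)*M) + 2 \<ge> 2*(n*(n+1))" using key by simp
    have h3: "((2*q+1)*k)*(n+1) + (n+1) = 2*n*(n+1)" using kk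
      by (metis add_mult_distrib mult_1 mult.assoc)
    from h h2 h3 have "n + 1 \<le> 2*(2*q+1) + 2" by (simp add: algebra_simps)
    thus False using nbig by simp
  qed
  have "real (2*M) > real (k*(n+1) + 2)" using fin by linarith
  hence "2 * real M > real k * (real n + 1) + 2" by (simp add: algebra_simps)
  thus ?thesis unfolding msum_perm_def M_def S_def by (simp add: field_simps)
qed

theorem theorem1p3:
  fixes n k :: nat
  assumes "odd k" and "k \<ge> 5" and "n > k"
    and "n mod k = ((k + 1) div 2) mod k"
  shows "msum n k > 1"
proof -
  define r where "r = (k+1) div 2"
  define q where "q = n div k"
  have rk: "2*r = k+1" "r < k" using assms(1,2) unfolding r_def by (auto elim: oddE)
  have nr: "n mod k = r" using assms(4) rk unfolding r_def by simp
  have nq: "n = q*k + r" unfolding q_def using nr div_mult_mod_eq[of n k] by simp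
  have q1: "q \<ge> 1" unfolding q_def using assms(3) assms(2)
    by (simp add: Suc_leI div_greater_zero_iff)
  have all: "\<forall>x\<in>{msum_perm n p k | p. p \<in> perms_of n}. x > 1"
    using main_perm[OF _ nq rk(1) q1 assms(2)] by auto
  have fin: "finite (perms_of n)"
  proof -
    have "perms_of n \<subseteq> {f. \<forall>x. (x \<in> {0..<n} \<longrightarrow> f x \<in> {1..n}) \<and> (x \<notin> {0..<n} \<longrightarrow> f x = 0)}"
      unfolding perms_of_def bij_betw_def by auto
    thus ?thesis using finite_subset finite_set_of_finite_funs[of "{0..<n}" "{1..n}" 0] by blast
  qed
  have ne: "(\<lambda>i. i + 1) \<in> perms_of n \<or> True" by simp
  define p0 where "p0 = (\<lambda>i::nat. if i < n then i + 1 else 0)"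
  have p0: "p0 \<in> perms_of n"
  proof -
    have "bij_betw p0 {0..<n} {1..n}"
    proof (rule bij_betw_imageI)
      show "inj_on p0 {0..<n}" unfolding p0_def inj_on_def by auto
      show "p0 ` {0..<n} = {1..n}"
      proof
        show "p0 ` {0..<n} \<subseteq> {1..n}" unfolding p0_def by auto
        show "{1..n} \<subseteq> p0 ` {0..<n}"
        proof
          fix y assume "y \<in> {1..n}"
          hence "y - 1 \<in> {0..<n}" "p0 (y-1) = y" unfolding p0_def by auto
          thus "y \<in> p0 ` {0..<n}" by (metis image_eqI)
        qed
      qed
    qed
    thus ?thesis unfolding perms_of_def p0_def by auto
  qed
  have eqS: "{msum_perm n p k | p. p \<in> perms_of n} = (\<lambda>p. msum_perm n p k) ` perms_of n" by auto
  have finS: "finite {msum_perm n p k | p. p \<in> perms_of n}" using eqS fin by simp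
  have neS: "{msum_perm n p k | p. p \<in> perms_of n} \<noteq> {}" using p0 by auto
  show ?thesis unfolding msum_def using Min_gr_iff[OF finS neS] all by simp
qed

end
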